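(* Let $q$ be a prime power and use the setting of the context. Then the code $\mathcal C=\bigcup_{i=0}^{q^2+q}\mathcal G_i$ is an orbit code: there is a subgroup of ${\rm PGL}(6,q)$ of order $(q^3-1)(q^2+q+1)$ leaving $\mathcal C$ invariant and acting transitively on its planes.
   Context: In ${\rm PG}(5,q)$ points are row vectors ${\bf X}=(X_1,\dots,X_6)$ with matrices acting on the right; write $X=(X_1,X_2,X_3)$, $Y=(X_4,X_5,X_6)$. Let $\pi_1$ be the plane $X_1=X_2=X_3=0$ and $\pi_2$ the plane $X_4=X_5=X_6=0$. Let $A$ be a Singer cycle of ${\rm GL}(3,q)$ (a $3\times3$ matrix of multiplicative order $q^3-1$). For $0\le i\le q^2+q$ let $\mathcal Q_i$ be the quadric with quadratic form $XA^iY^T$; each is a non-degenerate hyperbolic quadric containing $\pi_1,\pi_2$. Its planes fall into two classes (planes in the same class meet in one point), with $\pi_1,\pi_2$ in different classes. $\mathcal G_i$ is the set of the $q^3-1$ planes of $\mathcal Q_i$ in the class of $\pi_1$, distinct from $\pi_1$ and disjoint from $\pi_2$. An orbit code is a constant-dimension code admitting an automorphism group (a group of collineations preserving it) whose members form a single orbit under that group. *)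

theory Defs
  imports "HOL-Analysis.Analysis" "HOL-Algebra.Group"
begin

text \<open>The ambient space GF(q)^6 is modelled as row vectors of type 'a^(3+3); the coordinate
  Inl j is X_(j+1) and Inr j is X_(j+4), so X = (X_1,X_2,X_3) and Y = (X_4,X_5,X_6).
  Projective subspaces of PG(5,q) are vector subspaces of this space.\<close>

definition xpart :: "'a^(3+3) \<Rightarrow> 'a^3" where
  "xpart v = (\<chi> j. v $ Inl j)"

definition ypart :: "'a^(3+3) \<Rightarrow> 'a^3" where
  "ypart v = (\<chi> j. v $ Inr j)"

definition mpow :: "'a::semiring_1^'n^'n \<Rightarrow> nat \<Rightarrow> 'a^'n^'n" where
  "mpow A i = ((\<lambda>M. M ** A) ^^ i) (mat 1)"

definition singer_cycle :: "'a::{finite,field}^3^3 \<Rightarrow> bool" where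
  "singer_cycle A \<longleftrightarrow> invertible A \<and> mpow A (CARD('a)^3 - 1) = mat 1 \<and>
     (\<forall>k. 0 < k \<and> k < CARD('a)^3 - 1 \<longrightarrow> mpow A k \<noteq> mat 1)"

definition quad_form :: "'a::field^3^3 \<Rightarrow> nat \<Rightarrow> 'a^(3+3) \<Rightarrow> 'a" where
  "quad_form A i v = (\<Sum>j\<in>UNIV. \<Sum>k\<in>UNIV. xpart v $ j * mpow A i $ j $ k * ypart v $ k)"

definition pg_point :: "('a::field^(3+3)) set \<Rightarrow> bool" where
  "pg_point S \<longleftrightarrow> vec.subspace S \<and> vec.dim S = 1"

definition pg_plane :: "('a::field^(3+3)) set \<Rightarrow> bool" where
  "pg_plane S \<longleftrightarrow> vec.subspace S \<and> vec.dim S = 3"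

definition pi1 :: "('a::field^(3+3)) set" where
  "pi1 = {v. xpart v = 0}"

definition pi2 :: "('a::field^(3+3)) set" where
  "pi2 = {v. ypart v = 0}"

definition quadric_planes :: "'a::field^3^3 \<Rightarrow> nat \<Rightarrow> ('a^(3+3)) set set" where
  "quadric_planes A i = {S. pg_plane S \<and> (\<forall>v\<in>S. quad_form A i v = 0)}"

definition same_class :: "('a::field^(3+3)) set \<Rightarrow> ('a^(3+3)) set \<Rightarrow> bool" where
  "same_class S T \<longleftrightarrow> S = T \<or> pg_point (S \<inter> T)"

definition G_set :: "'a::field^3^3 \<Rightarrow> nat \<Rightarrow> ('a^(3+3)) set set" where
  "G_set A i = {S \<in> quadric_planes A i. same_class S pi1 \<and> S \<noteq> pi1 \<and> S \<inter> pi2 = {0}}"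

definition orbit_code_C :: "'a::{finite,field}^3^3 \<Rightarrow> ('a^(3+3)) set set" where
  "orbit_code_C A = (\<Union>i\<in>{0..CARD('a)^2 + CARD('a)}. G_set A i)"

definition proj_class :: "'a::field^(3+3)^(3+3) \<Rightarrow> ('a^(3+3)^(3+3)) set" where
  "proj_class M = {mat c ** M | c. c \<noteq> 0}"

definition PGL6 :: "('a::field^(3+3)^(3+3)) set monoid" where
  "PGL6 = \<lparr>carrier = proj_class ` {M. invertible M},
           mult = (\<lambda>X Y. {M ** N | M N. M \<in> X \<and> N \<in> Y}),
           one = proj_class (mat 1)\<rparr>"

text \<open>Action of a collineation (matrices act on the right of row vectors) on a subspace.\<close>
definition pgl_act :: "('a::field^(3+3)^(3+3)) set \<Rightarrow> ('a^(3+3)) set \<Rightarrow> ('a^(3+3)) set" where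
  "pgl_act X S = {v v* M | v M. v \<in> S \<and> M \<in> X}"

end

theory Submission
  imports Defs
begin


lemma mpow_0[simp]: "mpow A 0 = mat 1"
  by (simp add: mpow_def)

lemma mpow_Suc: "mpow A (Suc i) = mpow A i ** A"
  by (simp add: mpow_def)

lemma mpow_add: "mpow A (i + j) = mpow A i ** mpow A j"
  by (induction j) (simp_all add: mpow_Suc matrix_mul_assoc)

lemma mpow_1[simp]: "mpow A 1 = A"
  by (simp add: mpow_def)

lemma mpow_comm: "mpow A i ** mpow A j = mpow A j ** mpow A i"
  by (metis add.commute mpow_add)

lemma mpow_mult: "mpow A (i * j) = mpow (mpow A i) j"
proof (induction j)
  case (Suc j)
  have "mpow A (i * Suc j) = mpow A (i * j + i)" by (simp add: add.commute)
  then show ?case using Suc by (simp add: mpow_add mpow_Suc)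
qed simp

lemma mpow_transpose: "transpose (mpow (A::'a::comm_semiring_1^'n^'n) i) = mpow (transpose A) i"
proof (induction i)
  case 0 then show ?case by simp
next
  case (Suc i)
  have "transpose (mpow A (Suc i)) = transpose (mpow A (1 + i))" by simp
  also have "\<dots> = transpose (mpow A i) ** transpose A"
    by (simp only: mpow_add matrix_transpose_mul mpow_1)
  finally show ?case using Suc by (simp add: mpow_Suc)
qed

lemma mat_mult_left: "(mat c ** M) $ i $ j = c * M $ i $ j"
  by (simp add: matrix_matrix_mult_def mat_def if_distrib if_distribR sum.delta' cong: if_cong)

lemma mat_mult_right: "(M ** mat c) $ i $ j = M $ i $ j * c"
  by (simp add: matrix_matrix_mult_def mat_def if_distrib if_distribR sum.delta' cong: if_cong)

lemma mat_comm: "M ** mat (c::'a::comm_semiring_1) = mat c ** (M::'a^'n^'n)"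
  by (simp add: vec_eq_iff mat_mult_left mat_mult_right mult.commute)

lemma mat_mat: "mat c ** mat d = mat (c * (d::'a::comm_semiring_1))"
  by (simp add: vec_eq_iff mat_mult_left) (simp add: mat_def)

lemma mat_add: "mat c + mat d = (mat (c + d)::'a::comm_semiring_1^'n^'n)"
  by (simp add: vec_eq_iff mat_def)

lemma mat_left_add: "mat c ** M + mat d ** M = mat (c + d) ** (M::'a::comm_semiring_1^'n^'n)"
  by (simp add: vec_eq_iff mat_mult_left distrib_right)

lemma vmult_mat: "x v* mat c = (c::'a::field) *s x"
  by (simp add: vec_eq_iff vector_matrix_mult_def mat_def if_distrib if_distribR sum.delta' mult.commute
      cong: if_cong)

lemma mat_vmult: "x v* (mat c ** M) = (c::'a::field) *s (x v* M)"
  by (simp only: vector_matrix_mul_assoc[symmetric] vmult_mat scalar_vector_matrix_assoc)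



lemma card_ge2: "CARD('a::{finite,field}) \<ge> 2"
proof -
  have "card {0::'a, 1} \<le> CARD('a)" by (rule card_mono) auto
  then show ?thesis by simp
qed

lemma mpow_mat1[simp]: "mpow (mat 1) k = mat 1"
  by (induction k) (simp_all add: mpow_Suc)

lemma mpow_mat: "mpow (mat c) k = (mat (c ^ k) :: 'a::comm_semiring_1^'n^'n)"
  by (induction k) (simp_all add: mpow_Suc mat_mat mult.commute)

lemma comb_step:
  fixes M :: "'a::comm_ring_1^3^3"
  defines "t \<equiv> M$1$1 + M$2$2 + M$3$3"
    and "s \<equiv> M$1$1*M$2$2 - M$1$2*M$2$1 + M$1$1*M$3$3 - M$1$3*M$3$1 + M$2$2*M$3$3 - M$2$3*M$3$2"
    and "d \<equiv> M$1$1*(M$2$2*M$3$3 - M$2$3*M$3$2) - M$1$2*(M$2$1*M$3$3 - M$2$3*M$3$1)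
             + M$1$3*(M$2$1*M$3$2 - M$2$2*M$3$1)"
  shows "M ** (mat c0 + mat c1 ** M + mat c2 ** (M ** M)) =
     mat (c2 * d) + mat (c0 - c2 * s) ** M + mat (c1 + c2 * t) ** (M ** M)"
  unfolding vec_eq_iff forall_3
  by (simp add: mat_mult_left matrix_matrix_mult_def sum_3 assms)
     (simp add: mat_def algebra_simps)

definition combT :: "'a::comm_ring_1^3^3 \<Rightarrow> 'a \<times> 'a \<times> 'a \<Rightarrow> 'a^3^3" where
  "combT M c = mat (fst c) + mat (fst (snd c)) ** M + mat (snd (snd c)) ** (M ** M)"

lemma combT_zero[simp]: "combT M (0,0,0) = 0"
  by (simp add: combT_def)

lemma combT_diff: "combT M (a0,a1,a2) - combT M (b0,b1,b2) = combT M (a0-b0, a1-b1, a2-b2)"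
  by (simp add: combT_def vec_eq_iff mat_mult_left) (simp add: mat_def algebra_simps)

lemma comb_step':
  fixes M :: "'a::comm_ring_1^3^3"
  defines "t \<equiv> M$1$1 + M$2$2 + M$3$3"
    and "s \<equiv> M$1$1*M$2$2 - M$1$2*M$2$1 + M$1$1*M$3$3 - M$1$3*M$3$1 + M$2$2*M$3$3 - M$2$3*M$3$2"
    and "d \<equiv> M$1$1*(M$2$2*M$3$3 - M$2$3*M$3$2) - M$1$2*(M$2$1*M$3$3 - M$2$3*M$3$1)
             + M$1$3*(M$2$1*M$3$2 - M$2$2*M$3$1)"
  shows "M ** combT M (c0,c1,c2) = combT M (c2 * d, c0 - c2 * s, c1 + c2 * t)"
  unfolding combT_def fst_conv snd_conv t_def s_def d_def by (rule comb_step)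

lemma pow_in_comb: "mpow M k \<in> range (combT M)"
proof (induction k)
  case 0
  have "mpow M 0 = combT M (1,0,0)" by (simp add: combT_def)
  then show ?case by blast
next
  case (Suc k)
  then obtain c where c: "mpow M k = combT M c" by blast
  have e: "mpow M (Suc k) = M ** mpow M k"
    using mpow_comm[of M k 1] by (simp add: mpow_Suc)
  obtain c0 c1 c2 where cc: "c = (c0,c1,c2)" by (cases c) auto
  have "M ** combT M (c0,c1,c2) \<in> range (combT M)"
    by (simp only: comb_step') (rule rangeI)
  then show ?case using e c cc by simp
qed

lemma mat1_nz: "(mat 1 :: 'b::{field}^'n^'n) \<noteq> 0"
  by (simp add: vec_eq_iff mat_def) 

lemma not_inv_0: "\<not> invertible (0 :: 'b::field^'n^'n)"
  unfolding invertible_def using mat1_nz by (metis times0_left)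

context
  fixes A :: "'a::{finite,field}^3^3"
  assumes sing: "singer_cycle A"
begin

lemma N_pos: "CARD('a)^3 - 1 > 0"
proof -
  have "CARD('a)^3 \<ge> 2^3" using card_ge2 by (intro power_mono) auto
  then show ?thesis by simp
qed

lemma A_N: "mpow A (CARD('a)^3 - 1) = mat 1"
  using sing by (simp add: singer_cycle_def)

lemma mpow_mod: "mpow A i = mpow A (i mod (CARD('a)^3 - 1))"
proof -
  let ?N = "CARD('a)^3 - 1"
  have "mpow A i = mpow A (?N * (i div ?N) + i mod ?N)" by simp
  also have "\<dots> = mpow A (i mod ?N)"
    by (simp only: mpow_add mpow_mult A_N mpow_mat1 matrix_mul_lid)
  finally show ?thesis .
qed

lemma mpow_invertible: "invertible (mpow A i)"
proof -
  define N where "N = CARD('a)^3 - 1"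
  have Np: "N > 0" using N_pos N_def by simp
  have h: "(i + (N - i mod N)) mod N = 0"
  proof -
    have "i mod N < N" using Np by simp
    then have "i + (N - i mod N) = i div N * N + N"
      using div_mult_mod_eq[of i N] by linarith
    then show ?thesis by simp
  qed
  have "mpow A i ** mpow A (N - i mod N) = mat 1"
    by (metis h mpow_add mpow_mod mpow_0 N_def)
  moreover have "mpow A (N - i mod N) ** mpow A i = mat 1"
    by (metis h mpow_add mpow_mod mpow_0 add.commute N_def)
  ultimately show ?thesis unfolding invertible_def by blast
qed

lemma mpow_nz: "mpow A i \<noteq> 0"
  using mpow_invertible not_inv_0 by metis

lemma mpow_inj: "inj_on (mpow A) {..<CARD('a)^3 - 1}"
proof -
  let ?N = "CARD('a)^3 - 1"
  have *: False if "i < j" "j < ?N" "mpow A i = mpow A j" for i j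
  proof -
    have "mpow A (?N - i) ** mpow A j = mpow A (?N - i) ** mpow A i" using that by simp
    also have "\<dots> = mat 1"
    proof -
      have "?N - i + i = ?N" using that by simp
      then show ?thesis by (metis mpow_add A_N)
    qed
    finally have "mpow A (?N - i + j) = mat 1" by (simp only: mpow_add)
    moreover have "?N - i + j = ?N + (j - i)" using that by simp
    ultimately have e: "mpow A (?N + (j - i)) = mat 1" by metis
    then have "mpow A (j - i) = mat 1" by (simp only: mpow_add A_N matrix_mul_lid)
    moreover have "0 < j - i" "j - i < ?N" using that by auto
    ultimately show False using sing unfolding singer_cycle_def by blast
  qed
  show ?thesis unfolding inj_on_def
    by (metis * lessThan_iff linorder_neqE_nat)
qed

lemma mpow_eq_iff: "mpow A i = mpow A j \<longleftrightarrow> i mod (CARD('a)^3 - 1) = j mod (CARD('a)^3 - 1)"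
proof
  assume "mpow A i = mpow A j"
  then have "mpow A (i mod (CARD('a)^3 - 1)) = mpow A (j mod (CARD('a)^3 - 1))"
    using mpow_mod by metis
  then show "i mod (CARD('a)^3 - 1) = j mod (CARD('a)^3 - 1)"
    using mpow_inj N_pos by (auto simp: inj_on_def)
next
  assume "i mod (CARD('a)^3 - 1) = j mod (CARD('a)^3 - 1)"
  then show "mpow A i = mpow A j" using mpow_mod by metis
qed

lemma range_combT: "range (combT A) = insert 0 (mpow A ` {..<CARD('a)^3 - 1})"
  and inj_combT: "inj (combT A)"
proof -
  let ?N = "CARD('a)^3 - 1"
  have sub: "insert 0 (mpow A ` {..<?N}) \<subseteq> range (combT A)"
    using pow_in_comb combT_zero by (metis image_subsetI insert_subset rangeI)
  have c1: "card (insert 0 (mpow A ` {..<?N})) = CARD('a)^3"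
  proof -
    have "0 \<notin> mpow A ` {..<?N}" using mpow_nz by auto
    then have "card (insert 0 (mpow A ` {..<?N})) = card (mpow A ` {..<?N}) + 1" by simp
    also have "\<dots> = ?N + 1" using mpow_inj by (simp add: card_image)
    finally show ?thesis using N_pos by simp
  qed
  have c2: "card (range (combT A)) \<le> CARD('a)^3"
  proof -
    have "card (range (combT A)) \<le> CARD('a \<times> 'a \<times> 'a)" by (rule card_image_le) simp
    then show ?thesis by (simp add: power3_eq_cube)
  qed
  have c3: "card (range (combT A)) = CARD('a)^3"
    using card_mono[OF _ sub] c1 c2 by simp
  show "range (combT A) = insert 0 (mpow A ` {..<?N})"
    using card_subset_eq[OF _ sub] c1 c3 by simp
  show "inj (combT A)"
    by (rule eq_card_imp_inj_on) (simp_all add: c3 power3_eq_cube)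
qed

lemma combT_pow: "c \<noteq> (0,0,0) \<Longrightarrow> \<exists>k. combT A c = mpow A k"
proof -
  assume "c \<noteq> (0,0,0)"
  then have "combT A c \<noteq> 0" using inj_combT combT_zero by (metis injD)
  moreover have "combT A c \<in> range (combT A)" by simp
  ultimately show ?thesis unfolding range_combT by blast
qed

lemma scal_pow: "(c::'a) \<noteq> 0 \<Longrightarrow> \<exists>k. mpow A k = mat c"
  using combT_pow[of "(c,0,0)"] by (simp add: combT_def) metis

lemma trans_col:
  assumes "(k1::'a^3) \<noteq> 0" "k2 \<noteq> 0"
  shows "\<exists>b. mpow A b *v k1 = k2"
proof -
  let ?f = "\<lambda>c. combT A c *v k1"
  have inj: "inj ?f"
  proof (rule injI)
    fix c c' assume eq: "combT A c *v k1 = combT A c' *v k1"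
    obtain a0 a1 a2 where ca: "c = (a0,a1,a2)" by (cases c) auto
    obtain b0 b1 b2 where cb: "c' = (b0,b1,b2)" by (cases c') auto
    have "combT A (a0-b0,a1-b1,a2-b2) *v k1 = 0"
      using eq unfolding ca cb combT_diff[symmetric] by (simp add: matrix_vector_mult_diff_rdistrib)
    show "c = c'"
    proof (rule ccontr)
      assume "c \<noteq> c'"
      then have "(a0-b0,a1-b1,a2-b2) \<noteq> (0,0,0)" using ca cb by auto
      then obtain k where "combT A (a0-b0,a1-b1,a2-b2) = mpow A k" using combT_pow by blast
      then have "mpow A k *v k1 = mpow A k *v 0"
        using \<open>combT A (a0-b0,a1-b1,a2-b2) *v k1 = 0\<close> by simp
      then have "k1 = 0" using inj_matrix_vector_mult[OF mpow_invertible] by (metis injD)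
      then show False using assms by simp
    qed
  qed
  have "card (range ?f) = CARD('a \<times> 'a \<times> 'a)" using inj by (simp add: card_image)
  also have "\<dots> = CARD('a^3)" by (simp add: power3_eq_cube)
  finally have cardeq: "card (range ?f) = card (UNIV :: ('a^3) set)" .
  have r: "range ?f = UNIV" by (rule card_subset_eq) (simp_all only: cardeq finite subset_UNIV)
  have "k2 \<in> range ?f" by (simp only: r UNIV_I)
  then obtain c where c0: "k2 = combT A c *v k1" by blast
  then have c: "combT A c *v k1 = k2" by simp
  have "c \<noteq> (0,0,0)"
  proof
    assume "c = (0,0,0)"
    then have "k2 = 0" using c0 by simp
    then show False using assms by simp
  qed
  then obtain b where "combT A c = mpow A b" using combT_pow by blast
  then show ?thesis using c by auto
qed

end


definition scal :: "'a::zero^'n^'n \<Rightarrow> bool" where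
  "scal M \<longleftrightarrow> (\<exists>c. M = mat c)"

lemma mat_11[simp]: "mat c $ i $ i = c"
  by (simp add: mat_def)

lemma mat_inj: "mat c = mat d \<Longrightarrow> c = d"
  by (metis mat_11)

lemma inv_mat_ne0: "invertible (mat c :: 'a::field^'n^'n) \<Longrightarrow> c \<noteq> 0"
  using not_inv_0 by fastforce

lemma mat_cancel: "(c::'a::field) \<noteq> 0 \<Longrightarrow> mat (inverse c) ** (mat c ** M) = (M::'a^'n^'n)"
  by (simp add: matrix_mul_assoc mat_mat)

context
  fixes A :: "'a::{finite,field}^3^3"
  assumes sing: "singer_cycle A"
begin

lemma scal_mpow_ne0: "mpow A t = mat c \<Longrightarrow> c \<noteq> 0"
  using mpow_invertible[OF sing] inv_mat_ne0 by metis

lemma scal_sub: "scal (mpow A t) \<Longrightarrow> scal (mpow A (t + u)) \<Longrightarrow> scal (mpow A u)"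
proof -
  assume "scal (mpow A t)" "scal (mpow A (t + u))"
  then obtain c c' where c: "mpow A t = mat c" and c': "mpow A (t + u) = mat c'"
    unfolding scal_def by blast
  have "c \<noteq> 0" using c scal_mpow_ne0 by blast
  have "mpow A u = mat (inverse c) ** (mat c ** mpow A u)" by (rule mat_cancel[OF \<open>c \<noteq> 0\<close>, symmetric])
  also have "\<dots> = mat (inverse c * c')" using c c' by (simp add: mpow_add matrix_mul_assoc mat_mat)
  finally show ?thesis unfolding scal_def by blast
qed

lemma scal_mult: "scal (mpow A t) \<Longrightarrow> scal (mpow A (t * m))"
  unfolding scal_def by (metis mpow_mult mpow_mat)

definition t0 :: nat where "t0 = (LEAST t. 0 < t \<and> scal (mpow A t))"

lemma t0_ex: "0 < CARD('a)^3 - 1 \<and> scal (mpow A (CARD('a)^3 - 1))"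
  using N_pos[OF sing] A_N[OF sing] unfolding scal_def by blast

lemma t0_props: "0 < t0" "scal (mpow A t0)"
proof -
  have "\<exists>t. 0 < t \<and> scal (mpow A t)" using t0_ex by blast
  from LeastI_ex[OF this] show "0 < t0" "scal (mpow A t0)" unfolding t0_def by auto
qed

lemma t0_least: "0 < u \<Longrightarrow> u < t0 \<Longrightarrow> \<not> scal (mpow A u)"
  unfolding t0_def using not_less_Least by blast

lemma t0_dvd: "scal (mpow A t) \<Longrightarrow> t0 dvd t"
proof -
  assume st: "scal (mpow A t)"
  have "scal (mpow A (t0 * (t div t0)))" by (rule scal_mult[OF t0_props(2)])
  moreover have "scal (mpow A (t0 * (t div t0) + t mod t0))" using st by (simp only: mult_div_mod_eq)
  ultimately have "scal (mpow A (t mod t0))" by (rule scal_sub)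
  moreover have "t mod t0 < t0" using t0_props(1) by simp
  ultimately have "t mod t0 = 0" using t0_least[of "t mod t0"] by (metis neq0_conv)
  then show ?thesis by (rule mod_0_imp_dvd)
qed

lemma card_T: "card {t. t < CARD('a)^3 - 1 \<and> scal (mpow A t)} = CARD('a) - 1"
proof -
  define N where "N = CARD('a)^3 - 1"
  let ?T = "{t. t < N \<and> scal (mpow A t)}"
  let ?g = "\<lambda>t. mpow A t $ 1 $ 1"
  have inj: "inj_on ?g ?T"
  proof (rule inj_onI)
    fix x y assume "x \<in> ?T" "y \<in> ?T" "?g x = ?g y"
    then obtain cx cy where "mpow A x = mat cx" "mpow A y = mat cy" "x < N" "y < N"
      unfolding scal_def by auto
    with \<open>?g x = ?g y\<close> have "mpow A x = mpow A y" by simp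
    then show "x = y" using mpow_inj[OF sing] \<open>x < N\<close> \<open>y < N\<close> N_def by (auto simp: inj_on_def)
  qed
  have img: "?g ` ?T = {c. c \<noteq> 0}"
  proof
    show "?g ` ?T \<subseteq> {c. c \<noteq> 0}"
      using scal_mpow_ne0 unfolding scal_def by fastforce
  next
    show "{c. c \<noteq> 0} \<subseteq> ?g ` ?T"
    proof
      fix c :: 'a assume "c \<in> {c. c \<noteq> 0}"
      then obtain k where k: "mpow A k = mat c" using scal_pow[OF sing] by blast
      have "mpow A (k mod N) = mat c" using k mpow_mod[OF sing] N_def by metis
      moreover have "k mod N < N" using N_pos[OF sing] N_def by simp
      ultimately show "c \<in> ?g ` ?T" by (intro image_eqI[of _ _ "k mod N"]) (auto simp: scal_def)
    qed
  qed
  have "card ?T = card {c::'a. c \<noteq> 0}" using card_image[OF inj] img by simp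
  also have "{c::'a. c \<noteq> 0} = UNIV - {0}" by auto
  also have "card (UNIV - {0::'a}) = CARD('a) - 1" by (simp add: card_Diff_singleton)
  finally show ?thesis unfolding N_def .
qed

lemma N_factor: "(q::nat)^3 - 1 = (q^2 + q + 1) * (q - 1)"
  by (cases q) (simp_all add: algebra_simps power2_eq_square power3_eq_cube)

lemma t0_eq: "t0 = CARD('a)^2 + CARD('a) + 1"
proof -
  define N where "N = CARD('a)^3 - 1"
  have dvdN: "t0 dvd N" unfolding N_def using t0_ex by (intro t0_dvd) simp
  have "{t. t < N \<and> scal (mpow A t)} = {t. t < N \<and> t0 dvd t}"
  proof (rule Collect_cong)
    fix t
    show "(t < N \<and> scal (mpow A t)) = (t < N \<and> t0 dvd t)"
    proof
      assume "t < N \<and> scal (mpow A t)" then show "t < N \<and> t0 dvd t" using t0_dvd by blast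
    next
      assume a: "t < N \<and> t0 dvd t"
      then obtain m where "t = t0 * m" by (auto elim: dvdE)
      then show "t < N \<and> scal (mpow A t)" using a scal_mult[OF t0_props(2), of m] by simp
    qed
  qed
  also have "\<dots> = (\<lambda>m. t0 * m) ` {..< N div t0}"
  proof
    show "{t. t < N \<and> t0 dvd t} \<subseteq> (\<lambda>m. t0 * m) ` {..< N div t0}"
    proof
      fix t assume "t \<in> {t. t < N \<and> t0 dvd t}"
      then obtain m where m: "t = t0 * m" "t0 * m < N" by auto
      have "t0 * m < t0 * (N div t0)" using m(2) dvdN by simp
      then have "m < N div t0" by simp
      then show "t \<in> (\<lambda>m. t0 * m) ` {..< N div t0}" using m(1) by auto
    qed
  next
    show "(\<lambda>m. t0 * m) ` {..< N div t0} \<subseteq> {t. t < N \<and> t0 dvd t}"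
    proof
      fix t assume "t \<in> (\<lambda>m. t0 * m) ` {..< N div t0}"
      then obtain m where m: "t = t0 * m" "m < N div t0" by auto
      then have "t0 * m < t0 * (N div t0)" using t0_props(1) by simp
      then show "t \<in> {t. t < N \<and> t0 dvd t}" using m(1) dvdN by auto
    qed
  qed
  finally have "card ((\<lambda>m. t0 * m) ` {..< N div t0}) = CARD('a) - 1"
    using card_T N_def by simp
  moreover have "inj_on (\<lambda>m. t0 * m) {..< N div t0}" using t0_props(1) by (simp add: inj_on_def)
  ultimately have "N div t0 = CARD('a) - 1" by (simp add: card_image)
  then have "N = t0 * (CARD('a) - 1)" using dvdN by (metis dvd_mult_div_cancel)
  moreover have "N = (CARD('a)^2 + CARD('a) + 1) * (CARD('a) - 1)" using N_factor N_def by simp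
  moreover have "CARD('a) - 1 > 0" using card_ge2[where 'a='a] by simp
  ultimately have "t0 * (CARD('a) - 1) = (CARD('a)^2 + CARD('a) + 1) * (CARD('a) - 1)" by simp
  moreover have ne: "CARD('a) - 1 \<noteq> 0" using \<open>CARD('a) - 1 > 0\<close> by simp
  ultimately show ?thesis using mult_right_cancel[OF ne] by blast
qed

lemma An_scal: "\<exists>l. l \<noteq> 0 \<and> mpow A (CARD('a)^2 + CARD('a) + 1) = mat l"
  using t0_props(2) t0_eq scal_mpow_ne0 unfolding scal_def by metis

lemma n_least: "0 < u \<Longrightarrow> u < CARD('a)^2 + CARD('a) + 1 \<Longrightarrow> \<not> scal (mpow A u)"
  using t0_least t0_eq by simp

lemma pow_modn:
  assumes "m mod (CARD('a)^2 + CARD('a) + 1) = i mod (CARD('a)^2 + CARD('a) + 1)"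
  shows "\<exists>\<mu>. \<mu> \<noteq> 0 \<and> mpow A m = mat \<mu> ** mpow A i"
proof -
  define n where "n = CARD('a)^2 + CARD('a) + 1"
  obtain l where l: "l \<noteq> 0" "mpow A n = mat l" using An_scal n_def by blast
  have dec: "mpow A k = mat (l ^ (k div n)) ** mpow A (k mod n)" for k
  proof -
    have "mpow A k = mpow A (n * (k div n) + k mod n)" by simp
    also have "\<dots> = mat (l ^ (k div n)) ** mpow A (k mod n)"
      by (simp only: mpow_add mpow_mult l(2) mpow_mat)
    finally show ?thesis .
  qed
  have "mpow A m = mat (l ^ (m div n)) ** mpow A (m mod n)" by (rule dec)
  also have "m mod n = i mod n" using assms n_def by simp
  finally have "mpow A m = mat (l ^ (m div n)) ** mpow A (i mod n)" .
  also have "\<dots> = mat (l ^ (m div n)) ** (mat (inverse (l ^ (i div n))) ** (mat (l ^ (i div n)) ** mpow A (i mod n)))"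
    using l(1) by (simp add: mat_cancel)
  also have "\<dots> = mat (l ^ (m div n) * inverse (l ^ (i div n))) ** mpow A i"
    using dec[of i] by (simp add: matrix_mul_assoc mat_mat mult.assoc)
  finally have e: "mpow A m = mat (l ^ (m div n) * inverse (l ^ (i div n))) ** mpow A i" .
  show ?thesis by (rule exI[of _ "l ^ (m div n) * inverse (l ^ (i div n))"]) (use l(1) e in simp)
qed

end


definition mk :: "'a^3 \<Rightarrow> 'a^3 \<Rightarrow> 'a^(3+3)" where
  "mk x y = (\<chi> i. case i of Inl j \<Rightarrow> x $ j | Inr j \<Rightarrow> y $ j)"

lemma xpart_mk[simp]: "xpart (mk x y) = x" by (simp add: xpart_def mk_def)
lemma ypart_mk[simp]: "ypart (mk x y) = y" by (simp add: ypart_def mk_def)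
lemma mk_parts[simp]: "mk (xpart v) (ypart v) = v"
  by (simp add: vec_eq_iff xpart_def ypart_def mk_def split: sum.split)

lemma vec_parts_eq: "v = w \<longleftrightarrow> xpart v = xpart w \<and> ypart v = ypart w"
  by (metis mk_parts)

lemma xpart_add[simp]: "xpart (v + w) = xpart v + xpart w" by (simp add: xpart_def vec_eq_iff)
lemma ypart_add[simp]: "ypart (v + w) = ypart v + ypart w" by (simp add: ypart_def vec_eq_iff)
lemma xpart_scale[simp]: "xpart (c *s v) = c *s xpart v" by (simp add: xpart_def vec_eq_iff)
lemma ypart_scale[simp]: "ypart (c *s v) = c *s ypart v" by (simp add: ypart_def vec_eq_iff)
lemma xpart_zero[simp]: "xpart 0 = 0" by (simp add: xpart_def vec_eq_iff)
lemma ypart_zero[simp]: "ypart 0 = 0" by (simp add: ypart_def vec_eq_iff)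
lemma xpart_diff[simp]: "xpart (v - w) = xpart v - xpart w" by (simp add: xpart_def vec_eq_iff)
lemma ypart_diff[simp]: "ypart (v - w) = ypart v - ypart w" by (simp add: ypart_def vec_eq_iff)

definition bd :: "'a::semiring_1^3^3 \<Rightarrow> 'a^3^3 \<Rightarrow> 'a^(3+3)^(3+3)" where
  "bd P Q = (\<chi> i j. case i of Inl a \<Rightarrow> (case j of Inl b \<Rightarrow> P$a$b | Inr _ \<Rightarrow> 0)
                         | Inr a \<Rightarrow> (case j of Inl _ \<Rightarrow> 0 | Inr b \<Rightarrow> Q$a$b))"

lemma sum_UNIV_plus: "(\<Sum>i\<in>(UNIV::('b::finite + 'c::finite) set). f i) =
    (\<Sum>i\<in>UNIV. f (Inl i)) + (\<Sum>i\<in>UNIV. f (Inr i))"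
proof -
  have "(\<Sum>i\<in>(UNIV::('b + 'c) set). f i) = (\<Sum>i\<in>(UNIV <+> UNIV). f i)" by simp
  also have "\<dots> = (\<Sum>i\<in>UNIV. f (Inl i)) + (\<Sum>i\<in>UNIV. f (Inr i))"
    by (subst sum.Plus) (simp_all add: o_def)
  finally show ?thesis .
qed

lemma vbd: "v v* bd P Q = mk (xpart v v* P) (ypart v v* Q)"
  by (simp add: vec_eq_iff vector_matrix_mult_def bd_def mk_def xpart_def ypart_def sum_UNIV_plus
      split: sum.split)

lemma bd_mult: "bd P Q ** bd P' Q' = bd (P ** P') (Q ** Q')"
  by (simp add: vec_eq_iff matrix_matrix_mult_def bd_def sum_UNIV_plus split: sum.split)

lemma bd_mat: "bd (mat c) (mat c) = mat c"
  by (simp add: vec_eq_iff bd_def mat_def split: sum.split)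

lemma bd_inj: "bd P Q = bd P' Q' \<Longrightarrow> P = P' \<and> Q = Q'"
proof -
  assume h: "bd P Q = bd P' Q'"
  have "P $ a $ b = P' $ a $ b" "Q $ a $ b = Q' $ a $ b" for a b
    using arg_cong[OF h, of "\<lambda>M. M $ Inl a $ Inl b"] arg_cong[OF h, of "\<lambda>M. M $ Inr a $ Inr b"]
    by (simp_all add: bd_def)
  then show ?thesis by (simp add: vec_eq_iff)
qed

lemma mat_bd: "mat c ** bd P Q = bd (mat c ** P) (mat c ** Q)"
  by (metis bd_mat bd_mult)

lemma mat_assoc_comm: "(mat c ** (M::'a::comm_semiring_1^'n^'n)) ** (mat d ** N) = mat (c * d) ** (M ** (N::'a^'n^'n))"
proof -
  have "(mat c ** M) ** (mat d ** N) = mat c ** ((M ** mat d) ** N)" by (simp only: matrix_mul_assoc)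
  also have "\<dots> = mat c ** ((mat d ** M) ** N)" by (simp only: mat_comm[of M d])
  also have "\<dots> = mat (c*d) ** (M ** N)" by (simp only: matrix_mul_assoc mat_mat)
  finally show ?thesis .
qed

lemma pc_mult: "mult PGL6 (proj_class M) (proj_class N) = proj_class (M ** N)"
proof -
  have "{M' ** N' | M' N'. M' \<in> proj_class M \<and> N' \<in> proj_class N} = proj_class (M ** N)"
  proof
    show "{M' ** N' | M' N'. M' \<in> proj_class M \<and> N' \<in> proj_class N} \<subseteq> proj_class (M ** N)"
      unfolding proj_class_def using mat_assoc_comm by fastforce
  next
    show "proj_class (M ** N) \<subseteq> {M' ** N' | M' N'. M' \<in> proj_class M \<and> N' \<in> proj_class N}"
    proof
      fix X assume "X \<in> proj_class (M ** N)"
      then obtain c where c: "c \<noteq> 0" "X = mat c ** (M ** N)" unfolding proj_class_def by blast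
      then have "X = (mat c ** M) ** (mat 1 ** N)" by (simp add: matrix_mul_assoc)
      moreover have "mat c ** M \<in> proj_class M"
        using c(1) unfolding proj_class_def by blast
      moreover have "mat 1 ** N \<in> proj_class N"
        unfolding proj_class_def by (intro CollectI exI[of _ 1]) simp
      ultimately show "X \<in> {M' ** N' | M' N'. M' \<in> proj_class M \<and> N' \<in> proj_class N}" by blast
    qed
  qed
  then show ?thesis by (simp add: PGL6_def)
qed

lemma pc_scale: "c \<noteq> 0 \<Longrightarrow> proj_class (mat c ** M) = proj_class (M::'a::field^(3+3)^(3+3))"
proof -
  assume c: "c \<noteq> 0"
  have "proj_class (mat c ** M) \<subseteq> proj_class M" if "c \<noteq> 0" for c and M :: "'a^(3+3)^(3+3)"
    unfolding proj_class_def using that by (auto simp: matrix_mul_assoc mat_mat)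
  moreover have "M = mat (inverse c) ** (mat c ** M)" by (rule mat_cancel[OF c, symmetric])
  moreover have "inverse c \<noteq> 0" using c by simp
  ultimately show ?thesis using c by (metis subset_antisym)
qed

lemma pc_self: "M \<in> proj_class M"
  unfolding proj_class_def by (intro CollectI exI[of _ 1]) simp

lemma invertible_mult: "invertible M \<Longrightarrow> invertible N \<Longrightarrow> invertible (M ** (N::'a::field^'n^'n))"
proof -
  assume "invertible M" "invertible N"
  then obtain M' N' where "M ** M' = mat 1" "M' ** M = mat 1" "N ** N' = mat 1" "N' ** N = mat 1"
    unfolding invertible_def by blast
  then have "(M ** N) ** (N' ** M') = mat 1" "(N' ** M') ** (M ** N) = mat 1"
    by (simp_all add: matrix_mul_assoc[symmetric]) (simp_all add: matrix_mul_assoc)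
  then show ?thesis unfolding invertible_def by blast
qed

lemma carrier_PGL6: "carrier PGL6 = proj_class ` {M. invertible M}" by (simp add: PGL6_def)
lemma one_PGL6: "one PGL6 = proj_class (mat 1)" by (simp add: PGL6_def)

lemma group_PGL6: "group (PGL6 :: ('a::field^(3+3)^(3+3)) set monoid)"
proof (rule groupI)
  fix x y :: "('a^(3+3)^(3+3)) set"
  assume "x \<in> carrier PGL6" "y \<in> carrier PGL6"
  then obtain M N where "x = proj_class M" "y = proj_class N" "invertible M" "invertible N"
    by (auto simp: carrier_PGL6)
  then show "x \<otimes>\<^bsub>PGL6\<^esub> y \<in> carrier PGL6"
    by (simp add: pc_mult carrier_PGL6 invertible_mult)
next
  have "invertible (mat 1 :: 'a^(3+3)^(3+3))" unfolding invertible_def by (intro exI[of _ "mat 1"]) simp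
  then show "\<one>\<^bsub>PGL6\<^esub> \<in> (carrier PGL6 :: ('a^(3+3)^(3+3)) set set)"
    by (simp add: carrier_PGL6 one_PGL6)
next
  fix x y z :: "('a^(3+3)^(3+3)) set"
  assume "x \<in> carrier PGL6" "y \<in> carrier PGL6" "z \<in> carrier PGL6"
  then obtain M N P where "x = proj_class M" "y = proj_class N" "z = proj_class P"
    by (auto simp: carrier_PGL6)
  then show "x \<otimes>\<^bsub>PGL6\<^esub> y \<otimes>\<^bsub>PGL6\<^esub> z = x \<otimes>\<^bsub>PGL6\<^esub> (y \<otimes>\<^bsub>PGL6\<^esub> z)"
    by (simp add: pc_mult matrix_mul_assoc)
next
  fix x :: "('a^(3+3)^(3+3)) set"
  assume "x \<in> carrier PGL6"
  then obtain M where "x = proj_class M" by (auto simp: carrier_PGL6)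
  then show "\<one>\<^bsub>PGL6\<^esub> \<otimes>\<^bsub>PGL6\<^esub> x = x"
    by (simp add: pc_mult one_PGL6)
next
  fix x :: "('a^(3+3)^(3+3)) set"
  assume "x \<in> carrier PGL6"
  then obtain M where M: "x = proj_class M" "invertible M" by (auto simp: carrier_PGL6)
  then obtain M' where M': "M ** M' = mat 1" "M' ** M = mat 1" unfolding invertible_def by blast
  then have "invertible M'" unfolding invertible_def by blast
  then have "proj_class M' \<in> carrier PGL6" by (simp add: carrier_PGL6)
  moreover have "proj_class M' \<otimes>\<^bsub>PGL6\<^esub> x = \<one>\<^bsub>PGL6\<^esub>"
    using M M' by (simp add: pc_mult one_PGL6)
  ultimately show "\<exists>y\<in>carrier PGL6. y \<otimes>\<^bsub>PGL6\<^esub> x = \<one>\<^bsub>PGL6\<^esub>" by blast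
qed

lemma pgl_act_pc:
  assumes "vec.subspace S"
  shows "pgl_act (proj_class M) S = (\<lambda>v. v v* M) ` S"
proof
  show "pgl_act (proj_class M) S \<subseteq> (\<lambda>v. v v* M) ` S"
  proof
    fix w assume "w \<in> pgl_act (proj_class M) S"
    then obtain v c where "v \<in> S" "w = v v* (mat c ** M)" unfolding pgl_act_def proj_class_def by blast
    then have "w = (c *s v) v* M" by (simp add: mat_vmult scalar_vector_matrix_assoc)
    moreover have "c *s v \<in> S" using assms \<open>v \<in> S\<close> by (rule vec.subspace_scale)
    ultimately show "w \<in> (\<lambda>v. v v* M) ` S" by blast
  qed
next
  show "(\<lambda>v. v v* M) ` S \<subseteq> pgl_act (proj_class M) S"
    unfolding pgl_act_def using pc_self by blast
qed

lemma vm_linear: "Vector_Spaces.linear (*s) (*s) (\<lambda>v. v v* (M::'a::field^'m^'n))"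
proof -
  have "(\<lambda>v. v v* M) = (*v) (transpose M)" by (simp add: fun_eq_iff)
  then show ?thesis by simp
qed

lemma vm_image_subspace: "vec.subspace S \<Longrightarrow> vec.subspace ((\<lambda>v. v v* (M::'a::field^'m^'n)) ` S)"
proof -
  assume "vec.subspace S"
  have "(\<lambda>v. v v* M) = (*v) (transpose M)" by (simp add: fun_eq_iff)
  then show ?thesis using vec.subspace_image[OF \<open>vec.subspace S\<close>, of "transpose M"] by simp
qed

lemma vm_inj:
  assumes "M ** M' = mat 1"
  shows "inj (\<lambda>v. v v* (M::'a::field^'n^'n))"
proof (rule injI)
  fix v w assume "v v* M = w v* M"
  then have "(v v* M) v* M' = (w v* M) v* M'" by simp
  then show "v = w" by (simp add: vector_matrix_mul_assoc assms)
qed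

lemma vm_dim:
  assumes "M ** M' = mat 1"
  shows "vec.dim ((\<lambda>v. v v* (M::'a::field^'n^'n)) ` S) = vec.dim S"
  by (rule vec.dim_image_eq[OF vm_linear]) (rule inj_on_subset[OF vm_inj[OF assms] subset_UNIV])



definition E :: "'a::{finite,field}^3^3 \<Rightarrow> nat \<Rightarrow> nat \<Rightarrow> 'a^(3+3)^(3+3)" where
  "E A a b = bd (mpow A a) (transpose (mpow A b))"

definition Hgrp :: "'a::{finite,field}^3^3 \<Rightarrow> ('a^(3+3)^(3+3)) set set" where
  "Hgrp A = {proj_class (E A a b) | a b. True}"

definition dotp :: "'a::comm_semiring_1^'n \<Rightarrow> 'a^'n \<Rightarrow> 'a" where
  "dotp x y = (\<Sum>k\<in>UNIV. x $ k * y $ k)"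

lemma quad_dotp: "quad_form A i v = dotp (xpart v v* mpow A i) (ypart v)"
proof -
  have "quad_form A i v = (\<Sum>j\<in>UNIV. \<Sum>k\<in>UNIV. xpart v $ j * mpow A i $ j $ k * ypart v $ k)"
    by (simp add: quad_form_def)
  also have "\<dots> = (\<Sum>k\<in>UNIV. \<Sum>j\<in>UNIV. xpart v $ j * mpow A i $ j $ k * ypart v $ k)"
    by (rule sum.swap)
  also have "\<dots> = dotp (xpart v v* mpow A i) (ypart v)"
    by (simp add: dotp_def vector_matrix_mult_def sum_distrib_right)
  finally show ?thesis .
qed

lemma dotp_mv: "dotp u (M *v y) = dotp (u v* M) (y::'a::comm_semiring_1^'n)"
proof -
  have "dotp u (M *v y) = (\<Sum>k\<in>UNIV. \<Sum>j\<in>UNIV. u $ k * (M $ k $ j * y $ j))"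
    by (simp add: dotp_def matrix_vector_mult_def sum_distrib_left)
  also have "\<dots> = (\<Sum>j\<in>UNIV. \<Sum>k\<in>UNIV. u $ k * (M $ k $ j * y $ j))"
    by (rule sum.swap)
  also have "\<dots> = dotp (u v* M) y"
    by (simp add: dotp_def vector_matrix_mult_def sum_distrib_right mult.assoc)
  finally show ?thesis .
qed

lemma dotp_scale: "dotp (c *s u) y = c * dotp u y"
  by (simp add: dotp_def sum_distrib_left mult.assoc)

lemma right_cancel: "X ** P = Y ** P \<Longrightarrow> invertible P \<Longrightarrow> X = (Y::'a::field^'n^'n)"
proof -
  assume h: "X ** P = Y ** P" "invertible P"
  then obtain P' where "P ** P' = mat 1" unfolding invertible_def by blast
  then have "X = (X ** P) ** P'" "Y = (Y ** P) ** P'" by (simp_all add: matrix_mul_assoc[symmetric])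
  then show ?thesis using h(1) by simp
qed

lemma transpose_mat_mult: "transpose (mat c ** M) = mat c ** transpose (M::'a::comm_semiring_1^'n^'n)"
  by (simp add: matrix_transpose_mul mat_comm)

definition iexp :: "nat \<Rightarrow> nat \<Rightarrow> nat" where "iexp N k = N - k mod N"

context
  fixes A :: "'a::{finite,field}^3^3"
  assumes sing: "singer_cycle A"
begin

lemma ie_exp: "mpow A (k + iexp (CARD('a)^3 - 1) k) = mat 1"
proof -
  define N where "N = CARD('a)^3 - 1"
  have Np: "N > 0" using N_pos[OF sing] N_def by simp
  have "k mod N < N" using Np by simp
  then have "k + (N - k mod N) = k div N * N + N"
    using div_mult_mod_eq[of k N] by linarith
  then have "(k + (N - k mod N)) mod N = 0 mod N" by simp
  then have "mpow A (k + (N - k mod N)) = mpow A 0" using mpow_eq_iff[OF sing] N_def by metis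
  then show ?thesis using N_def by (simp add: iexp_def)
qed

lemma E_mult: "E A a b ** E A a' b' = E A (a + a') (b + b')"
proof -
  have "transpose (mpow A b) ** transpose (mpow A b') = transpose (mpow A (b + b'))"
    by (simp add: matrix_transpose_mul[symmetric] mpow_add[symmetric] add.commute)
  then show ?thesis by (simp add: E_def bd_mult mpow_add)
qed

lemma E_one: "mpow A a = mat 1 \<Longrightarrow> mpow A b = mat 1 \<Longrightarrow> E A a b = mat 1"
  by (simp add: E_def bd_mat)


lemma E_inv: "E A a b ** E A (iexp (CARD('a)^3 - 1) a) (iexp (CARD('a)^3 - 1) b) = mat 1" "E A (iexp (CARD('a)^3 - 1) a) (iexp (CARD('a)^3 - 1) b) ** E A a b = mat 1"
proof -
  show "E A a b ** E A (iexp (CARD('a)^3 - 1) a) (iexp (CARD('a)^3 - 1) b) = mat 1"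
    by (simp only: E_mult) (rule E_one; rule ie_exp)
  show "E A (iexp (CARD('a)^3 - 1) a) (iexp (CARD('a)^3 - 1) b) ** E A a b = mat 1"
    by (simp only: E_mult add.commute[of "iexp (CARD('a)^3 - 1) a"] add.commute[of "iexp (CARD('a)^3 - 1) b"]) (rule E_one; rule ie_exp)
qed

lemma E_invertible: "invertible (E A a b)"
  unfolding invertible_def using E_inv by blast

lemma Hgrp_subgroup: "subgroup (Hgrp A) PGL6"
proof (rule subgroup.intro)
  show "Hgrp A \<subseteq> carrier PGL6"
    unfolding Hgrp_def carrier_PGL6 using E_invertible by blast
next
  fix x y assume "x \<in> Hgrp A" "y \<in> Hgrp A"
  then obtain a b a' b' where "x = proj_class (E A a b)" "y = proj_class (E A a' b')"
    unfolding Hgrp_def by blast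
  then have "x \<otimes>\<^bsub>PGL6\<^esub> y = proj_class (E A (a + a') (b + b'))" by (simp add: pc_mult E_mult)
  then show "x \<otimes>\<^bsub>PGL6\<^esub> y \<in> Hgrp A" unfolding Hgrp_def by blast
next
  have "\<one>\<^bsub>PGL6\<^esub> = proj_class (E A 0 0)" by (simp add: one_PGL6 E_one)
  then show "\<one>\<^bsub>PGL6\<^esub> \<in> Hgrp A" unfolding Hgrp_def by blast
next
  fix x assume "x \<in> Hgrp A"
  then obtain a b where x: "x = proj_class (E A a b)" unfolding Hgrp_def by blast
  have "inv\<^bsub>PGL6\<^esub> x = proj_class (E A (iexp (CARD('a)^3 - 1) a) (iexp (CARD('a)^3 - 1) b))"
  proof (rule group.inv_equality[OF group_PGL6])
    show "proj_class (E A (iexp (CARD('a)^3 - 1) a) (iexp (CARD('a)^3 - 1) b)) \<otimes>\<^bsub>PGL6\<^esub> x = \<one>\<^bsub>PGL6\<^esub>"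
      unfolding x pc_mult E_inv(2) one_PGL6 by (rule refl)
    show "x \<in> carrier PGL6" using x E_invertible by (simp add: carrier_PGL6)
    show "proj_class (E A (iexp (CARD('a)^3 - 1) a) (iexp (CARD('a)^3 - 1) b)) \<in> carrier PGL6" using E_invertible by (simp add: carrier_PGL6)
  qed
  then show "inv\<^bsub>PGL6\<^esub> x \<in> Hgrp A" unfolding Hgrp_def by blast
qed

lemma b_unique_aux:
  assumes "b2 \<le> b1" "b1 < CARD('a)^2 + CARD('a) + 1" "mpow A b1 = mat c ** mpow A b2"
  shows "b1 = b2"
proof (rule ccontr)
  assume ne: "b1 \<noteq> b2"
  have "mpow A (b1 - b2) ** mpow A b2 = mpow A b1"
    using assms(1) by (simp add: mpow_add[symmetric])
  then have "mpow A (b1 - b2) ** mpow A b2 = mat c ** mpow A b2" using assms(3) by simp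
  then have "mpow A (b1 - b2) = mat c" by (rule right_cancel) (rule mpow_invertible[OF sing])
  then have "scal (mpow A (b1 - b2))" unfolding scal_def by blast
  moreover have "0 < b1 - b2" "b1 - b2 < CARD('a)^2 + CARD('a) + 1" using assms ne by auto
  ultimately show False using n_least[OF sing] by blast
qed

lemma b_unique:
  assumes "b1 < CARD('a)^2 + CARD('a) + 1" "b2 < CARD('a)^2 + CARD('a) + 1"
    "mpow A b1 = mat c ** mpow A b2"
  shows "b1 = b2"
proof (cases "b2 \<le> b1")
  case True then show ?thesis using b_unique_aux assms by blast
next
  case False
  have "c \<noteq> 0"
  proof
    assume "c = 0"
    then have "mpow A b1 = 0" using assms(3) by simp
    then show False using mpow_nz[OF sing] by blast
  qed
  have "mpow A b2 = mat (inverse c) ** mpow A b1"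
    using assms(3) by (simp add: mat_cancel[OF \<open>c \<noteq> 0\<close>])
  then show ?thesis using b_unique_aux[of b1 b2] False assms by simp
qed

lemma Hgrp_image:
  "Hgrp A = (\<lambda>(a,b). proj_class (E A a b)) ` ({..<CARD('a)^3 - 1} \<times> {..<CARD('a)^2 + CARD('a) + 1})"
proof
  show "(\<lambda>(a,b). proj_class (E A a b)) ` ({..<CARD('a)^3 - 1} \<times> {..<CARD('a)^2 + CARD('a) + 1}) \<subseteq> Hgrp A"
    unfolding Hgrp_def by auto
next
  show "Hgrp A \<subseteq> (\<lambda>(a,b). proj_class (E A a b)) ` ({..<CARD('a)^3 - 1} \<times> {..<CARD('a)^2 + CARD('a) + 1})"
  proof
    fix x assume "x \<in> Hgrp A"
    then obtain a b where x: "x = proj_class (E A a b)" unfolding Hgrp_def by blast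
    define n where "n = CARD('a)^2 + CARD('a) + 1"
    define N where "N = CARD('a)^3 - 1"
    obtain \<mu> where mu: "\<mu> \<noteq> 0" "mpow A b = mat \<mu> ** mpow A (b mod n)"
      using pow_modn[OF sing, of b "b mod n"] n_def by auto
    have "inverse \<mu> \<noteq> 0" using mu(1) by simp
    then obtain t where t: "mpow A t = mat (inverse \<mu>)" using scal_pow[OF sing] by blast
    have "E A a b = bd (mat \<mu> ** (mat (inverse \<mu>) ** mpow A a)) (mat \<mu> ** transpose (mpow A (b mod n)))"
      using mu by (simp add: E_def transpose_mat_mult matrix_mul_assoc mat_mat)
    also have "\<dots> = mat \<mu> ** bd (mpow A (t + a)) (transpose (mpow A (b mod n)))"
      by (simp add: mat_bd mpow_add t)
    also have "mpow A (t + a) = mpow A ((t + a) mod N)" using mpow_mod[OF sing] N_def by metis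
    finally have "E A a b = mat \<mu> ** E A ((t + a) mod N) (b mod n)" by (simp add: E_def)
    then have "x = proj_class (E A ((t + a) mod N) (b mod n))" using x pc_scale[OF mu(1)] by simp
    moreover have "(t + a) mod N < N" "b mod n < n"
      using N_pos[OF sing] N_def n_def by simp_all
    ultimately show "x \<in> (\<lambda>(a,b). proj_class (E A a b)) ` ({..<CARD('a)^3 - 1} \<times> {..<CARD('a)^2 + CARD('a) + 1})"
      using N_def n_def by force
  qed
qed

lemma Hgrp_inj:
  "inj_on (\<lambda>(a,b). proj_class (E A a b)) ({..<CARD('a)^3 - 1} \<times> {..<CARD('a)^2 + CARD('a) + 1})"
proof (rule inj_onI)
  fix p1 p2
  assume p1: "p1 \<in> {..<CARD('a)^3 - 1} \<times> {..<CARD('a)^2 + CARD('a) + 1}"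
    and p2: "p2 \<in> {..<CARD('a)^3 - 1} \<times> {..<CARD('a)^2 + CARD('a) + 1}"
    and eq0: "(\<lambda>(a,b). proj_class (E A a b)) p1 = (\<lambda>(a,b). proj_class (E A a b)) p2"
  obtain a1 b1 where pp1: "p1 = (a1, b1)" by (cases p1) auto
  obtain a2 b2 where pp2: "p2 = (a2, b2)" by (cases p2) auto
  have a1: "a1 \<in> {..<CARD('a)^3 - 1}" and b1: "b1 \<in> {..<CARD('a)^2 + CARD('a) + 1}"
    using p1 pp1 by auto
  have a2: "a2 \<in> {..<CARD('a)^3 - 1}" and b2: "b2 \<in> {..<CARD('a)^2 + CARD('a) + 1}"
    using p2 pp2 by auto
  have eq: "proj_class (E A a1 b1) = proj_class (E A a2 b2)" using eq0 pp1 pp2 by simp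
  have "E A a1 b1 \<in> proj_class (E A a2 b2)" using pc_self eq by metis
  then obtain c where c: "c \<noteq> 0" "E A a1 b1 = mat c ** E A a2 b2" unfolding proj_class_def by blast
  then have "bd (mpow A a1) (transpose (mpow A b1)) = bd (mat c ** mpow A a2) (mat c ** transpose (mpow A b2))"
    by (simp add: E_def mat_bd)
  then have ea: "mpow A a1 = mat c ** mpow A a2" and eb: "transpose (mpow A b1) = mat c ** transpose (mpow A b2)"
    using bd_inj by blast+
  have "mpow A b1 = mat c ** mpow A b2"
    using arg_cong[OF eb, of transpose] by (simp add: transpose_mat_mult)
  then have "b1 = b2" using b_unique b1 b2 by simp
  with \<open>mpow A b1 = mat c ** mpow A b2\<close> have "mat 1 ** mpow A b1 = mat c ** mpow A b1" by simp
  then have "mat 1 = (mat c :: 'a^3^3)" by (rule right_cancel) (rule mpow_invertible[OF sing])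
  then have "c = 1" using mat_inj by metis
  then have "mpow A a1 = mpow A a2" using ea by simp
  then have "a1 = a2" using mpow_inj[OF sing] a1 a2 by (auto simp: inj_on_def)
  then show "p1 = p2" using \<open>b1 = b2\<close> pp1 pp2 by simp
qed

lemma card_Hgrp: "card (Hgrp A) = (CARD('a)^3 - 1) * (CARD('a)^2 + CARD('a) + 1)"
  unfolding Hgrp_image card_image[OF Hgrp_inj] card_cartesian_product card_lessThan by (rule refl)

end


lemma E_x: "xpart (v v* E A a b) = xpart v v* mpow A a" by (simp add: E_def vbd)
lemma E_y: "ypart (v v* E A a b) = mpow A b *v ypart v" by (simp add: E_def vbd)

lemma quad_E: "quad_form A i' (v v* E A a b) = dotp (xpart v v* mpow A (a + i' + b)) (ypart v)"
  by (simp only: quad_dotp E_x E_y dotp_mv vector_matrix_mul_assoc mpow_add)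

lemma exp_choice:
  fixes n :: nat
  assumes "n > 0"
  shows "\<exists>i'. i' < n \<and> (a + i' + b) mod n = i mod n"
proof -
  define r where "r = (a + b) mod n"
  have r: "r < n" using assms r_def by simp
  define i' where "i' = (i + (n - r)) mod n"
  have "i' < n" using assms i'_def by simp
  have e1: "(a + i' + b) mod n = ((a + b) + (i + (n - r))) mod n"
    unfolding i'_def by (metis add.commute add.left_commute mod_add_right_eq)
  have "(a + b) div n * n + r = a + b" using div_mult_mod_eq r_def by simp
  then have h1: "(a + b) + (i + (n - r)) = (a + b) div n * n + n + i" using r by linarith
  have h2: "(a + b) div n * n + n + i = i + ((a + b) div n + 1) * n" by (simp add: algebra_simps)
  have "((a + b) + (i + (n - r))) mod n = i mod n" by (simp only: h1 h2 mod_mult_self1)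
  then show ?thesis using e1 \<open>i' < n\<close> by metis
qed

context
  fixes A :: "'a::{finite,field}^3^3"
  assumes sing: "singer_cycle A"
begin

lemma fg_id: "(\<lambda>v. v v* E A a b) ` ((\<lambda>v. v v* E A (iexp (CARD('a)^3 - 1) a) (iexp (CARD('a)^3 - 1) b)) ` X) = X"
proof -
  have "\<And>w. (w v* E A (iexp (CARD('a)^3 - 1) a) (iexp (CARD('a)^3 - 1) b)) v* E A a b = w"
    by (simp only: vector_matrix_mul_assoc E_inv[OF sing] vector_matrix_mul_rid)
  then show ?thesis by (simp add: image_image)
qed

lemma img_pi1_sub: "(\<lambda>v. v v* E A a b) ` pi1 \<subseteq> pi1"
  by (auto simp: pi1_def E_x)

lemma img_pi2_sub: "(\<lambda>v. v v* E A a b) ` pi2 \<subseteq> pi2"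
  by (auto simp: pi2_def E_y)

lemma img_pi1: "(\<lambda>v. v v* E A a b) ` pi1 = pi1"
proof
  show "(\<lambda>v. v v* E A a b) ` pi1 \<subseteq> pi1" by (rule img_pi1_sub)
  have "(\<lambda>v. v v* E A (iexp (CARD('a)^3 - 1) a) (iexp (CARD('a)^3 - 1) b)) ` pi1 \<subseteq> pi1"
    by (rule img_pi1_sub)
  then have "(\<lambda>v. v v* E A a b) ` ((\<lambda>v. v v* E A (iexp (CARD('a)^3 - 1) a) (iexp (CARD('a)^3 - 1) b)) ` pi1)
     \<subseteq> (\<lambda>v. v v* E A a b) ` pi1" by (rule image_mono)
  then show "pi1 \<subseteq> (\<lambda>v. v v* E A a b) ` pi1" by (simp only: fg_id)
qed

lemma img_pi2: "(\<lambda>v. v v* E A a b) ` pi2 = pi2"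
proof
  show "(\<lambda>v. v v* E A a b) ` pi2 \<subseteq> pi2" by (rule img_pi2_sub)
  have "(\<lambda>v. v v* E A (iexp (CARD('a)^3 - 1) a) (iexp (CARD('a)^3 - 1) b)) ` pi2 \<subseteq> pi2"
    by (rule img_pi2_sub)
  then have "(\<lambda>v. v v* E A a b) ` ((\<lambda>v. v v* E A (iexp (CARD('a)^3 - 1) a) (iexp (CARD('a)^3 - 1) b)) ` pi2)
     \<subseteq> (\<lambda>v. v v* E A a b) ` pi2" by (rule image_mono)
  then show "pi2 \<subseteq> (\<lambda>v. v v* E A a b) ` pi2" by (simp only: fg_id)
qed

lemma E_inj: "inj (\<lambda>v. v v* E A a b)"
  by (rule vm_inj[OF E_inv(1)[OF sing]])

lemma E_sub: "vec.subspace T \<Longrightarrow> vec.subspace ((\<lambda>v. v v* E A a b) ` T)"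
  by (rule vm_image_subspace)

lemma E_dim: "vec.dim ((\<lambda>v. v v* E A a b) ` T) = vec.dim T"
  by (rule vm_dim[OF E_inv(1)[OF sing]])

lemma G_inv:
  assumes S: "S \<in> G_set A i"
  shows "\<exists>i'\<in>{0..CARD('a)^2 + CARD('a)}. (\<lambda>v. v v* E A a b) ` S \<in> G_set A i'"
proof -
  let ?f = "\<lambda>v. v v* E A a b"
  define n where "n = CARD('a)^2 + CARD('a) + 1"
  obtain i' where i': "i' < n" "(a + i' + b) mod n = i mod n"
    using exp_choice[of n a b i] n_def by auto
  have Sp: "pg_plane S" and Sq: "\<forall>v\<in>S. quad_form A i v = 0" and Sc: "same_class S pi1"
    and Sne: "S \<noteq> pi1" and S2: "S \<inter> pi2 = {0}"
    using S unfolding G_set_def quadric_planes_def by auto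
  have "pg_plane (?f ` S)"
    using Sp E_sub E_dim unfolding pg_plane_def by simp
  moreover have "\<forall>w\<in>?f ` S. quad_form A i' w = 0"
  proof
    fix w assume "w \<in> ?f ` S"
    then obtain v where v: "v \<in> S" "w = ?f v" by blast
    obtain \<mu> where mu: "mpow A (a + i' + b) = mat \<mu> ** mpow A i"
      using pow_modn[OF sing] i'(2) n_def by blast
    have "quad_form A i' w = dotp (xpart v v* mpow A (a + i' + b)) (ypart v)"
      using v(2) quad_E by simp
    also have "\<dots> = \<mu> * quad_form A i v"
      by (simp only: mu mat_vmult dotp_scale quad_dotp)
    finally show "quad_form A i' w = 0" using Sq v(1) by simp
  qed
  moreover have "?f ` S \<noteq> pi1"
  proof
    assume "?f ` S = pi1"
    then have "?f ` S = ?f ` pi1" using img_pi1 by simp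
    then have "S = pi1" using E_inj by (simp add: inj_image_eq_iff)
    then show False using Sne by simp
  qed
  moreover have "same_class (?f ` S) pi1"
  proof -
    have "pg_point (S \<inter> pi1)" using Sc Sne unfolding same_class_def by simp
    moreover have "?f ` S \<inter> pi1 = ?f ` (S \<inter> pi1)"
      using img_pi1 E_inj by (metis image_Int)
    ultimately have "pg_point (?f ` S \<inter> pi1)"
      using E_sub E_dim unfolding pg_point_def by simp
    then show ?thesis unfolding same_class_def by simp
  qed
  moreover have "?f ` S \<inter> pi2 = {0}"
  proof -
    have "?f ` S \<inter> pi2 = ?f ` (S \<inter> pi2)"
      using img_pi2 E_inj by (metis image_Int)
    then show ?thesis using S2 by simp
  qed
  ultimately have "?f ` S \<in> G_set A i'"
    unfolding G_set_def quadric_planes_def by simp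
  moreover have "i' \<in> {0..CARD('a)^2 + CARD('a)}" using i'(1) n_def by simp
  ultimately show ?thesis by blast
qed

lemma C_inv: "S \<in> orbit_code_C A \<Longrightarrow> (\<lambda>v. v v* E A a b) ` S \<in> orbit_code_C A"
  unfolding orbit_code_C_def using G_inv by blast

lemma C_sub: "S \<in> orbit_code_C A \<Longrightarrow> vec.subspace S"
  unfolding orbit_code_C_def G_set_def quadric_planes_def pg_plane_def by auto

lemma act_C: "pgl_act (proj_class (E A a b)) ` orbit_code_C A = orbit_code_C A"
proof -
  let ?f = "\<lambda>v. v v* E A a b"
  let ?g = "\<lambda>v. v v* E A (iexp (CARD('a)^3 - 1) a) (iexp (CARD('a)^3 - 1) b)"
  have "pgl_act (proj_class (E A a b)) ` orbit_code_C A = (\<lambda>S. ?f ` S) ` orbit_code_C A"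
    by (rule image_cong[OF refl]) (rule pgl_act_pc[OF C_sub])
  also have "\<dots> = orbit_code_C A"
  proof
    show "(\<lambda>S. ?f ` S) ` orbit_code_C A \<subseteq> orbit_code_C A" using C_inv by blast
    show "orbit_code_C A \<subseteq> (\<lambda>S. ?f ` S) ` orbit_code_C A"
    proof
      fix T assume "T \<in> orbit_code_C A"
      then have "?g ` T \<in> orbit_code_C A" by (rule C_inv)
      moreover have "T = ?f ` (?g ` T)" by (simp only: fg_id)
      ultimately show "T \<in> (\<lambda>S. ?f ` S) ` orbit_code_C A" by blast
    qed
  qed
  finally show ?thesis .
qed

end


definition Py :: "'a::semiring_1^(3+3)^3" where
  "Py = (\<chi> j i. if i = Inr j then 1 else 0)"

lemma ypart_Py: "ypart v = Py *v v"
  by (simp add: vec_eq_iff ypart_def Py_def matrix_vector_mult_def if_distrib if_distribR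
      sum.delta cong: if_cong)

definition alt3 :: "'a::comm_ring_1^3^3 \<Rightarrow> bool" where
  "alt3 K \<longleftrightarrow> K$1$1 = 0 \<and> K$2$2 = 0 \<and> K$3$3 = 0 \<and> K$2$1 = - K$1$2 \<and> K$3$1 = - K$1$3 \<and> K$3$2 = - K$2$3"

lemma dotp3: "dotp (y v* K) y = (\<Sum>k\<in>UNIV. (\<Sum>j\<in>UNIV. y$j * K$j$k) * y$k)"
  by (simp add: dotp_def vector_matrix_mult_def)

lemma alt3I:
  fixes K :: "'a::comm_ring_1^3^3"
  assumes h: "\<And>y. dotp (y v* K) y = 0"
  shows "alt3 K"
proof -
  have e: "\<And>x1 x2 x3. (x1*K$1$1 + x2*K$2$1 + x3*K$3$1)*x1 + (x1*K$1$2 + x2*K$2$2 + x3*K$3$2)*x2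
      + (x1*K$1$3 + x2*K$2$3 + x3*K$3$3)*x3 = 0"
  proof -
    fix x1 x2 x3 :: 'a
    have "dotp (vector [x1,x2,x3] v* K) (vector [x1,x2,x3]) = 0" by (rule h)
    then show "(x1*K$1$1 + x2*K$2$1 + x3*K$3$1)*x1 + (x1*K$1$2 + x2*K$2$2 + x3*K$3$2)*x2
      + (x1*K$1$3 + x2*K$2$3 + x3*K$3$3)*x3 = 0"
      by (simp only: dotp3 sum_3 vector_3)
  qed
  have d1: "K$1$1 = 0" using e[of 1 0 0] by simp
  have d2: "K$2$2 = 0" using e[of 0 1 0] by simp
  have d3: "K$3$3 = 0" using e[of 0 0 1] by simp
  have o12: "K$2$1 = - K$1$2" using e[of 1 1 0] d1 d2 by (simp add: algebra_simps eq_neg_iff_add_eq_0)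
  have o13: "K$3$1 = - K$1$3" using e[of 1 0 1] d1 d3 by (simp add: algebra_simps eq_neg_iff_add_eq_0)
  have o23: "K$3$2 = - K$2$3" using e[of 0 1 1] d2 d3 by (simp add: algebra_simps eq_neg_iff_add_eq_0)
  show ?thesis unfolding alt3_def using d1 d2 d3 o12 o13 o23 by simp
qed

definition kv :: "'a::comm_ring_1^3^3 \<Rightarrow> 'a^3" where
  "kv K = vector [K$2$3, - K$1$3, K$1$2]"

lemma vm3: "((k::'a::semiring_1^3) v* K) $ j = k$1 * K$1$j + k$2 * K$2$j + k$3 * K$3$j"
  by (simp add: vector_matrix_mult_def sum_3)

lemma kv_kernel: "alt3 K \<Longrightarrow> kv K v* K = 0"
  unfolding vec_eq_iff forall_3 vm3 kv_def alt3_def by (simp add: algebra_simps)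

lemma alt3_zero: "alt3 K \<Longrightarrow> K$1$2 = 0 \<Longrightarrow> K$1$3 = 0 \<Longrightarrow> K$2$3 = 0 \<Longrightarrow> K = 0"
  unfolding alt3_def vec_eq_iff forall_3 by simp

lemma kv_nz: "alt3 K \<Longrightarrow> K \<noteq> 0 \<Longrightarrow> kv K \<noteq> 0"
proof -
  assume a: "alt3 K" "K \<noteq> 0"
  show "kv K \<noteq> 0"
  proof
    assume "kv K = 0"
    then have "(kv K)$1 = 0" "(kv K)$2 = 0" "(kv K)$3 = 0" by simp_all
    then have "K$2$3 = 0" "K$1$3 = 0" "K$1$2 = 0" unfolding kv_def by simp_all
    then show False using alt3_zero a by blast
  qed
qed

lemma sol3:
  fixes k1 k2 k3 a b c :: "'a::field"
  assumes c1: "- (k2 * a) = k3 * b" and c2: "k1 * a = k3 * c" and c3: "k1 * b + k2 * c = 0"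
    and nz: "k1 \<noteq> 0 \<or> k2 \<noteq> 0 \<or> k3 \<noteq> 0"
  shows "\<exists>t. a = t * k3 \<and> b = - t * k2 \<and> c = t * k1"
proof -
  have "k1 \<noteq> 0 \<Longrightarrow> a = c / k1 * k3 \<and> b = - (c / k1) * k2 \<and> c = c / k1 * k1"
    and "k2 \<noteq> 0 \<Longrightarrow> a = - b / k2 * k3 \<and> b = - (- b / k2) * k2 \<and> c = - b / k2 * k1"
    and "k3 \<noteq> 0 \<Longrightarrow> a = a / k3 * k3 \<and> b = - (a / k3) * k2 \<and> c = a / k3 * k1"
    using c1 c2 c3 by (auto simp: field_simps) (metis add.commute add_eq_0_iff mult.commute)+
  then show ?thesis using nz by blast
qed

lemma alt3_sol:
  fixes K :: "'a::field^3^3"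
  assumes "alt3 K" "k \<noteq> 0" "k v* K = 0"
  shows "\<exists>t. K$1$2 = t * k$3 \<and> K$1$3 = - t * k$2 \<and> K$2$3 = t * k$1"
proof -
  have c: "(k v* K)$1 = 0" "(k v* K)$2 = 0" "(k v* K)$3 = 0" using assms(3) by simp_all
  then have c1: "- (k $ 2 * K $ 1 $ 2) = k $ 3 * K $ 1 $ 3" and c2: "k $ 1 * K $ 1 $ 2 = k $ 3 * K $ 2 $ 3"
    and c3: "k $ 1 * K $ 1 $ 3 + k $ 2 * K $ 2 $ 3 = 0"
    using assms(1) unfolding vm3 alt3_def by (simp_all add: algebra_simps)
  have "k$1 \<noteq> 0 \<or> k$2 \<noteq> 0 \<or> k$3 \<noteq> 0"
    using assms(2) unfolding vec_eq_iff forall_3 by auto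
  then show ?thesis using sol3[OF c1 c2 c3] by blast
qed

lemma alt3_prop:
  fixes K K' :: "'a::field^3^3"
  assumes "alt3 K" "alt3 K'" "K' \<noteq> 0" "k \<noteq> 0" "k v* K = 0" "k v* K' = 0"
  shows "\<exists>\<mu>. K = mat \<mu> ** K'"
proof -
  obtain t where t: "K$1$2 = t * k$3" "K$1$3 = - t * k$2" "K$2$3 = t * k$1"
    using alt3_sol assms(1,4,5) by blast
  obtain t' where t': "K'$1$2 = t' * k$3" "K'$1$3 = - t' * k$2" "K'$2$3 = t' * k$1"
    using alt3_sol assms(2,4,6) by blast
  have "t' \<noteq> 0"
  proof
    assume "t' = 0"
    then have "K' = 0" using alt3_zero[OF assms(2)] t' by simp
    then show False using assms(3) by simp
  qed
  have "K = mat (t / t') ** K'"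
    unfolding vec_eq_iff forall_3 mat_mult_left
    using assms(1,2) t t' \<open>t' \<noteq> 0\<close> unfolding alt3_def by simp
  then show ?thesis by blast
qed



lemma ypart_linear: "Vector_Spaces.linear (*s) (*s) (ypart :: 'a::field^(3+3) \<Rightarrow> 'a^3)"
proof -
  have e: "ypart = ((*v) Py :: 'a^(3+3) \<Rightarrow> 'a^3)" by (simp add: fun_eq_iff ypart_Py)
  show ?thesis unfolding e by (rule matrix_vector_mul_linear_gen)
qed

lemma ypart_image_subspace: "vec.subspace S \<Longrightarrow> vec.subspace (ypart ` (S :: ('a::field^(3+3)) set))"
proof -
  assume "vec.subspace S"
  have "ypart = ((*v) Py :: 'a^(3+3) \<Rightarrow> 'a^3)" by (simp add: fun_eq_iff ypart_Py)
  then show ?thesis using vec.subspace_image[OF \<open>vec.subspace S\<close>, of Py] by simp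
qed

lemma graph_exists:
  fixes A :: "'a::{finite,field}^3^3"
  assumes S: "S \<in> G_set A i"
  shows "\<exists>C. S = {v. xpart v = ypart v v* C} \<and> C \<noteq> 0 \<and> (\<forall>y. dotp (y v* (C ** mpow A i)) y = 0)"
proof -
  have Ssub: "vec.subspace S" and Sdim: "vec.dim S = 3" and Sq: "\<forall>v\<in>S. quad_form A i v = 0"
    and Sne: "S \<noteq> pi1" and S2: "S \<inter> pi2 = {0}"
    using S unfolding G_set_def quadric_planes_def pg_plane_def by auto
  have inj: "inj_on ypart S"
  proof (rule inj_onI)
    fix u w assume u: "u \<in> S" and w: "w \<in> S" and e: "ypart u = ypart w"
    have "u - w \<in> S" using vec.subspace_diff[OF Ssub u w] .
    moreover have "u - w \<in> pi2" using e by (simp add: pi2_def)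
    ultimately have "u - w \<in> {0}" using S2 by blast
    then show "u = w" by simp
  qed
  have spanS: "vec.span S = S" using Ssub by simp
  have dimY: "vec.dim (ypart ` S) = 3"
    using vec.dim_image_eq[OF ypart_linear, of S] inj spanS Sdim by simp
  have subY: "vec.subspace (ypart ` S)" by (rule ypart_image_subspace[OF Ssub])
  have "vec.span (ypart ` S) = UNIV"
    using vec.dim_eq_full[of "ypart ` S"] dimY by (simp add: vec.dimension_def card_cart_basis)
  moreover have "vec.span (ypart ` S) = ypart ` S" using subY vec.span_eq_iff by blast
  ultimately have full: "ypart ` S = UNIV" by simp
  define g where "g = the_inv_into S ypart"
  have gS: "g y \<in> S" for y
    unfolding g_def by (rule the_inv_into_into[OF inj]) (simp_all add: full)
  have gy: "ypart (g y) = y" for y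
    unfolding g_def by (rule f_the_inv_into_f[OF inj]) (simp add: full)
  have gv: "v \<in> S \<Longrightarrow> g (ypart v) = v" for v
    unfolding g_def by (rule the_inv_into_f_f[OF inj])
  have gadd: "g (y1 + y2) = g y1 + g y2" for y1 y2
  proof -
    have "g y1 + g y2 \<in> S" using vec.subspace_add[OF Ssub gS gS] .
    then have "g (ypart (g y1 + g y2)) = g y1 + g y2" by (rule gv)
    then show ?thesis using gy by simp
  qed
  have gscale: "g (c *s y) = c *s g y" for c y
  proof -
    have "c *s g y \<in> S" using vec.subspace_scale[OF Ssub gS] .
    then have "g (ypart (c *s g y)) = c *s g y" by (rule gv)
    then show ?thesis using gy by simp
  qed
  define h where "h y = xpart (g y)" for y
  have hlin: "Vector_Spaces.linear (*s) (*s) h"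
    unfolding Vector_Spaces.linear_iff h_def
    using gadd gscale vec.vector_space_axioms by simp
  define C where "C = transpose (matrix h)"
  have hC: "y v* C = h y" for y
    unfolding C_def using matrix_works[OF hlin] by simp
  have graph: "S = {v. xpart v = ypart v v* C}"
  proof
    show "S \<subseteq> {v. xpart v = ypart v v* C}"
    proof
      fix v assume "v \<in> S"
      then have "g (ypart v) = v" by (rule gv)
      then show "v \<in> {v. xpart v = ypart v v* C}" by (simp add: hC h_def)
    qed
  next
    show "{v. xpart v = ypart v v* C} \<subseteq> S"
    proof
      fix v assume "v \<in> {v. xpart v = ypart v v* C}"
      then have "xpart v = xpart (g (ypart v))" by (simp add: hC h_def)
      moreover have "ypart v = ypart (g (ypart v))" by (simp add: gy)
      ultimately have "v = g (ypart v)" using vec_parts_eq by blast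
      then show "v \<in> S" using gS by metis
    qed
  qed
  have "C \<noteq> 0"
  proof
    assume "C = 0"
    then have "S = pi1" using graph by (simp add: pi1_def)
    then show False using Sne by simp
  qed
  moreover have "\<forall>y. dotp (y v* (C ** mpow A i)) y = 0"
  proof
    fix y
    have "mk (y v* C) y \<in> S" using graph by simp
    then have "quad_form A i (mk (y v* C) y) = 0" using Sq by blast
    then show "dotp (y v* (C ** mpow A i)) y = 0"
      by (simp add: quad_dotp vector_matrix_mul_assoc)
  qed
  ultimately show ?thesis using graph by blast
qed



lemma graph_image:
  fixes C1 C2 P P' :: "'a::field^3^3"
  assumes PC: "P ** C2 = C1 ** Q" and PP': "P' ** P = mat 1"
  shows "(\<lambda>v. v v* bd Q P) ` {v. xpart v = ypart v v* C1} = {v. xpart v = ypart v v* C2}"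
proof
  show "(\<lambda>v. v v* bd Q P) ` {v. xpart v = ypart v v* C1} \<subseteq> {v. xpart v = ypart v v* C2}"
  proof
    fix w assume "w \<in> (\<lambda>v. v v* bd Q P) ` {v. xpart v = ypart v v* C1}"
    then obtain v where v: "xpart v = ypart v v* C1" "w = v v* bd Q P" by blast
    have "xpart w = (ypart v v* C1) v* Q" using v by (simp add: vbd)
    also have "\<dots> = ypart v v* (P ** C2)" by (simp add: vector_matrix_mul_assoc PC)
    also have "\<dots> = ypart w v* C2" using v by (simp add: vbd vector_matrix_mul_assoc)
    finally show "w \<in> {v. xpart v = ypart v v* C2}" by simp
  qed
next
  show "{v. xpart v = ypart v v* C2} \<subseteq> (\<lambda>v. v v* bd Q P) ` {v. xpart v = ypart v v* C1}"
  proof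
    fix w assume w: "w \<in> {v. xpart v = ypart v v* C2}"
    define y where "y = ypart w v* P'"
    have yP: "y v* P = ypart w" unfolding y_def by (simp add: vector_matrix_mul_assoc PP')
    define v where "v = mk (y v* C1) y"
    have "v v* bd Q P = w"
    proof -
      have "xpart (v v* bd Q P) = y v* (C1 ** Q)" by (simp add: v_def vbd vector_matrix_mul_assoc)
      also have "\<dots> = (y v* P) v* C2" by (simp add: PC[symmetric] vector_matrix_mul_assoc)
      also have "\<dots> = xpart w" using w yP by simp
      finally have "xpart (v v* bd Q P) = xpart w" .
      moreover have "ypart (v v* bd Q P) = ypart w" by (simp add: v_def vbd yP)
      ultimately show ?thesis using vec_parts_eq by blast
    qed
    moreover have "v \<in> {v. xpart v = ypart v v* C1}" by (simp add: v_def)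
    ultimately show "w \<in> (\<lambda>v. v v* bd Q P) ` {v. xpart v = ypart v v* C1}" by blast
  qed
qed

lemma alt_of_C:
  assumes "\<forall>y. dotp (y v* (C ** M)) y = 0"
  shows "alt3 (C ** M)"
  using assms by (intro alt3I) blast

context
  fixes A :: "'a::{finite,field}^3^3"
  assumes sing: "singer_cycle A"
begin

lemma K_nz: "(C::'a^3^3) \<noteq> 0 \<Longrightarrow> C ** mpow A i \<noteq> 0"
proof
  assume "C \<noteq> 0" "C ** mpow A i = 0"
  then have "C ** mpow A i = 0 ** mpow A i" by simp
  then have "C = 0" by (rule right_cancel) (rule mpow_invertible[OF sing])
  then show False using \<open>C \<noteq> 0\<close> by simp
qed

lemma transitive:
  assumes S: "S \<in> G_set A i1" and T: "T \<in> G_set A i2"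
  shows "\<exists>X\<in>Hgrp A. pgl_act X S = T"
proof -
  define N where "N = CARD('a)^3 - 1"
  have Np: "N > 0" using N_pos[OF sing] N_def by simp
  obtain C1 where gr1: "S = {v. xpart v = ypart v v* C1}" and nz1: "C1 \<noteq> 0"
    and q1: "\<forall>y. dotp (y v* (C1 ** mpow A i1)) y = 0"
    using graph_exists[OF S] by blast
  obtain C2 where gr2: "T = {v. xpart v = ypart v v* C2}" and nz2: "C2 \<noteq> 0"
    and q2: "\<forall>y. dotp (y v* (C2 ** mpow A i2)) y = 0"
    using graph_exists[OF T] by blast
  define K1 where "K1 = C1 ** mpow A i1"
  define K2 where "K2 = C2 ** mpow A i2"
  have alt1: "alt3 K1" unfolding K1_def by (rule alt_of_C[OF q1])
  have alt2: "alt3 K2" unfolding K2_def by (rule alt_of_C[OF q2])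
  have K1nz: "K1 \<noteq> 0" unfolding K1_def by (rule K_nz[OF nz1])
  have K2nz: "K2 \<noteq> 0" unfolding K2_def by (rule K_nz[OF nz2])
  define k1 where "k1 = kv K1"
  define k2 where "k2 = kv K2"
  have k1nz: "k1 \<noteq> 0" unfolding k1_def by (rule kv_nz[OF alt1 K1nz])
  have k2nz: "k2 \<noteq> 0" unfolding k2_def by (rule kv_nz[OF alt2 K2nz])
  have k1K: "k1 v* K1 = 0" unfolding k1_def by (rule kv_kernel[OF alt1])
  have k2K: "k2 v* K2 = 0" unfolding k2_def by (rule kv_kernel[OF alt2])
  obtain b where b: "mpow A b *v k1 = k2" using trans_col[OF sing k1nz k2nz] by blast
  define P where "P = transpose (mpow A b)"
  define P' where "P' = transpose (mpow A (iexp N b))"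
  have Eb1: "mpow A b ** mpow A (iexp N b) = mat 1"
    using ie_exp[OF sing, of b] N_def by (simp only: mpow_add)
  have Eb2: "mpow A (iexp N b) ** mpow A b = mat 1"
    using Eb1 mpow_comm by metis
  have PP': "P' ** P = mat 1"
    unfolding P_def P'_def by (simp only: matrix_transpose_mul[symmetric] Eb1 transpose_mat)
  have P'P: "P ** P' = mat 1"
    unfolding P_def P'_def by (simp only: matrix_transpose_mul[symmetric] Eb2 transpose_mat)
  define K' where "K' = P ** K2 ** mpow A b"
  have altK': "alt3 K'"
  proof (rule alt3I)
    fix y :: "'a^3"
    have "dotp (y v* K') y = dotp (((y v* P) v* K2) v* mpow A b) y"
      by (simp only: K'_def vector_matrix_mul_assoc)
    also have "\<dots> = dotp ((y v* P) v* K2) (mpow A b *v y)" by (simp only: dotp_mv)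
    also have "mpow A b *v y = y v* P" by (simp add: P_def)
    also have "dotp ((y v* P) v* K2) (y v* P) = 0" using q2 unfolding K2_def by blast
    finally show "dotp (y v* K') y = 0" .
  qed
  have K'nz: "K' \<noteq> 0"
  proof
    assume "K' = 0"
    have "K' ** mpow A (iexp N b) = P ** K2"
      unfolding K'_def by (simp only: matrix_mul_assoc[symmetric] Eb1 matrix_mul_rid)
    then have "P ** K2 = 0" using \<open>K' = 0\<close> by simp
    then have "P' ** (P ** K2) = 0" by simp
    then have "K2 = 0" by (simp only: matrix_mul_assoc PP' matrix_mul_lid)
    then show False using K2nz by simp
  qed
  have k1K': "k1 v* K' = 0"
  proof -
    have "k1 v* K' = ((k1 v* P) v* K2) v* mpow A b" by (simp only: K'_def vector_matrix_mul_assoc)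
    also have "k1 v* P = k2" using b by (simp add: P_def)
    finally show ?thesis using k2K by simp
  qed
  obtain \<mu> where mu: "K1 = mat \<mu> ** K'" using alt3_prop[OF alt1 altK' K'nz k1nz k1K k1K'] by blast
  have munz: "\<mu> \<noteq> 0"
  proof
    assume "\<mu> = 0"
    then have "K1 = 0" using mu by simp
    then show False using K1nz by simp
  qed
  have K'eq: "K' = mat (inverse \<mu>) ** K1" unfolding mu by (rule mat_cancel[OF munz, symmetric])
  have "inverse \<mu> \<noteq> 0" using munz by simp
  then obtain t where t: "mpow A t = mat (inverse \<mu>)" using scal_pow[OF sing] by blast
  obtain a' where a': "a' < N" "(i2 + a' + b) mod N = (t + i1) mod N"
    using exp_choice[OF Np, of i2 b "t + i1"] by blast
  have PC: "P ** C2 = C1 ** mpow A a'"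
  proof (rule right_cancel)
    show "invertible (mpow A (i2 + b))" by (rule mpow_invertible[OF sing])
    have "(P ** C2) ** mpow A (i2 + b) = K'"
      by (simp only: K'_def K2_def mpow_add matrix_mul_assoc)
    also have "\<dots> = mpow A t ** (C1 ** mpow A i1)" by (simp only: K'eq t K1_def)
    also have "\<dots> = C1 ** mpow A (t + i1)"
      by (simp only: t mpow_add matrix_mul_assoc mat_comm[of C1, symmetric])
    also have "mpow A (t + i1) = mpow A (a' + (i2 + b))"
      using mpow_eq_iff[OF sing] a'(2) N_def by (simp add: ac_simps)
    finally show "(P ** C2) ** mpow A (i2 + b) = (C1 ** mpow A a') ** mpow A (i2 + b)"
      by (simp only: mpow_add matrix_mul_assoc)
  qed
  have img: "(\<lambda>v. v v* E A a' b) ` S = T"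
    unfolding gr1 gr2 E_def using graph_image[OF PC PP'] by (simp add: P_def)
  have Ssub: "vec.subspace S" using S unfolding G_set_def quadric_planes_def pg_plane_def by auto
  have "pgl_act (proj_class (E A a' b)) S = T" using pgl_act_pc[OF Ssub] img by simp
  moreover have "proj_class (E A a' b) \<in> Hgrp A" unfolding Hgrp_def by blast
  ultimately show ?thesis by blast
qed

end

theorem corollary4p9:
  fixes A :: "'a::{finite,field}^3^3"
  assumes "singer_cycle A"
  shows "\<exists>H. subgroup H PGL6 \<and>
           card H = (CARD('a)^3 - 1) * (CARD('a)^2 + CARD('a) + 1) \<and>
           (\<forall>X\<in>H. pgl_act X ` orbit_code_C A = orbit_code_C A) \<and>
           (\<forall>S\<in>orbit_code_C A. \<forall>T\<in>orbit_code_C A. \<exists>X\<in>H. pgl_act X S = T)"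
proof (intro exI conjI)
  show "subgroup (Hgrp A) PGL6" by (rule Hgrp_subgroup[OF assms])
  show "card (Hgrp A) = (CARD('a)^3 - 1) * (CARD('a)^2 + CARD('a) + 1)" by (rule card_Hgrp[OF assms])
  show "\<forall>X\<in>Hgrp A. pgl_act X ` orbit_code_C A = orbit_code_C A"
  proof
    fix X assume "X \<in> Hgrp A"
    then obtain a b where "X = proj_class (E A a b)" unfolding Hgrp_def by blast
    then show "pgl_act X ` orbit_code_C A = orbit_code_C A" using act_C[OF assms] by simp
  qed
  show "\<forall>S\<in>orbit_code_C A. \<forall>T\<in>orbit_code_C A. \<exists>X\<in>Hgrp A. pgl_act X S = T"
  proof (intro ballI)
    fix S T assume "S \<in> orbit_code_C A" "T \<in> orbit_code_C A"
    then obtain i1 i2 where "S \<in> G_set A i1" "T \<in> G_set A i2" unfolding orbit_code_C_def by blast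
    then show "\<exists>X\<in>Hgrp A. pgl_act X S = T" by (rule transitive[OF assms])
  qed
qed


end
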